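(* Let $X$ and $Y$ be nontrivial metrizable spaces. The following are equivalent: (1) $X$ is countable; (2) $Q_p(X,\mathbb{D})$ is Fr\'{e}chet-Urysohn; (3) $Q_p(X,Y)$ is Fr\'{e}chet-Urysohn; (4) $Q_p(X,Y)$ is first countable; (5) $Q_p(X,Y)$ is metrizable.
   Context: A function $f:X\to Y$ is quasicontinuous if for every $x\in X$, every open $V\ni f(x)$ and every open $U\ni x$ there is a nonempty open $W\subseteq U$ with $f(W)\subseteq V$. $Q_p(X,Y)$ is the set of all quasicontinuous functions $X\to Y$ with the topology of pointwise convergence; $\mathbb{D}=\{0,1\}$ is the discrete two-point space. A space $Z$ is Fr\'{e}chet-Urysohn if for every $A\subseteq Z$ and $z\in\overline{A}$ there is a sequence in $A$ converging to $z$. Nontrivial means having more than one point. *)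

theory Defs
  imports "HOL-Analysis.Analysis"
begin

definition quasicontinuous_map :: "'a topology \<Rightarrow> 'b topology \<Rightarrow> ('a \<Rightarrow> 'b) \<Rightarrow> bool" where
  "quasicontinuous_map X Y f \<longleftrightarrow>
     f ` topspace X \<subseteq> topspace Y \<and>
     (\<forall>x \<in> topspace X. \<forall>V U. openin Y V \<and> f x \<in> V \<and> openin X U \<and> x \<in> U \<longrightarrow>
        (\<exists>W. openin X W \<and> W \<noteq> {} \<and> W \<subseteq> U \<and> f ` W \<subseteq> V))"

text \<open>Q_p(X,Y): quasicontinuous functions (extensional on topspace X) with the
  topology of pointwise convergence, i.e. the subspace of the product Y^X.\<close>
definition Qp :: "'a topology \<Rightarrow> 'b topology \<Rightarrow> ('a \<Rightarrow> 'b) topology" where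
  "Qp X Y = subtopology (product_topology (\<lambda>_. Y) (topspace X))
              {f \<in> extensional (topspace X). quasicontinuous_map X Y f}"

definition two_point_discrete :: "bool topology" where
  "two_point_discrete = discrete_topology (UNIV :: bool set)"

definition frechet_urysohn :: "'a topology \<Rightarrow> bool" where
  "frechet_urysohn Z \<longleftrightarrow>
     (\<forall>A z. A \<subseteq> topspace Z \<and> z \<in> Z closure_of A \<longrightarrow>
        (\<exists>\<sigma>. range \<sigma> \<subseteq> A \<and> limitin Z \<sigma> z sequentially))"

definition nontrivial_space :: "'a topology \<Rightarrow> bool" where
  "nontrivial_space X \<longleftrightarrow> (\<exists>a b. a \<in> topspace X \<and> b \<in> topspace X \<and> a \<noteq> b)"

end

theory Submission
  imports Defs
begin

lemma metrizable_imp_FU: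
  assumes "metrizable_space Z" shows "frechet_urysohn Z"
proof -
  obtain M d where md: "Metric_space M d" and Z: "Z = Metric_space.mtopology M d"
    using assms metrizable_space_def by blast
  interpret Metric_space M d by (rule md)
  show ?thesis unfolding frechet_urysohn_def Z
  proof (intro allI impI, elim conjE)
    fix A z assume "A \<subseteq> topspace mtopology" "z \<in> mtopology closure_of A"
    then show "\<exists>\<sigma>. range \<sigma> \<subseteq> A \<and> limitin mtopology \<sigma> z sequentially"
      using closure_of_sequentially by auto
  qed
qed

lemma first_countable_imp_FU:
  assumes "first_countable Z" shows "frechet_urysohn Z"
  unfolding frechet_urysohn_def
proof (intro allI impI, elim conjE)
  fix A z assume A: "A \<subseteq> topspace Z" and z: "z \<in> Z closure_of A"
  then have zt: "z \<in> topspace Z" using closure_of_subset_topspace by fastforce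
  then obtain B where B: "countable B" "\<forall>V\<in>B. openin Z V"
    "\<And>U. openin Z U \<and> z \<in> U \<Longrightarrow> \<exists>V\<in>B. z \<in> V \<and> V \<subseteq> U"
    using assms unfolding first_countable_def by metis
  define B' where "B' = {V\<in>B. z \<in> V}"
  have "B' \<noteq> {}" using B(3)[of "topspace Z"] zt unfolding B'_def by auto
  moreover have "countable B'" using B(1) unfolding B'_def by auto
  ultimately have rng: "range (from_nat_into B') = B'"
    by (simp add: range_from_nat_into)
  define b where "b = from_nat_into B'"
  have bo: "openin Z (b n)" "z \<in> b n" for n
    using rng B(2) unfolding b_def B'_def by blast+
  define C where "C n = \<Inter> (b ` {..n})" for n
  have Co: "openin Z (C n)" "z \<in> C n" for n
    unfolding C_def using bo by (auto intro: openin_Inter)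
  have "\<exists>y. y \<in> A \<and> y \<in> C n" for n
    using z Co unfolding in_closure_of by blast
  then obtain \<sigma> where \<sigma>: "\<And>n. \<sigma> n \<in> A \<and> \<sigma> n \<in> C n" by metis
  have "limitin Z \<sigma> z sequentially"
    unfolding limitin_def
  proof (intro conjI zt allI impI)
    fix U assume "openin Z U \<and> z \<in> U"
    then obtain V where "V \<in> B" "z \<in> V" "V \<subseteq> U" using B(3) by blast
    then have "V \<in> B'" unfolding B'_def by auto
    then obtain k where k: "b k = V" using rng unfolding b_def by (metis rangeE)
    show "\<forall>\<^sub>F x in sequentially. \<sigma> x \<in> U"
      unfolding eventually_sequentially
    proof (intro exI allI impI)
      fix n assume "k \<le> n"
      then have "C n \<subseteq> b k" unfolding C_def by auto
      then show "\<sigma> n \<in> U" using \<sigma> k \<open>V \<subseteq> U\<close> by blast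
    qed
  qed
  then show "\<exists>\<sigma>. range \<sigma> \<subseteq> A \<and> limitin Z \<sigma> z sequentially" using \<sigma> by blast
qed

lemma countable_imp_Qp_metrizable:
  assumes "countable (topspace X)" "metrizable_space Y"
  shows "metrizable_space (Qp X Y)"
  unfolding Qp_def
proof (rule metrizable_space_subtopology)
  show "metrizable_space (product_topology (\<lambda>_. Y) (topspace X))"
    unfolding metrizable_space_product_topology
    using assms countable_subset[of _ "topspace X"] by auto
qed



lemma GEN:
  fixes X :: "'a topology" and Z :: "'b topology" and BB :: "'a set \<Rightarrow> 'a set"
  assumes HZ: "Hausdorff_space Z" and ab: "a \<in> topspace Z" "b \<in> topspace Z" "a \<noteq> b"
  and BBp: "\<And>F. finite F \<Longrightarrow> F \<subseteq> topspace X \<Longrightarrow> closedin X (BB F) \<and> F \<subseteq> BB F \<and>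
      (\<forall>x \<in> BB F. \<forall>U. openin X U \<and> x \<in> U \<longrightarrow> (\<exists>W. openin X W \<and> W \<noteq> {} \<and> W \<subseteq> U \<and> W \<subseteq> BB F))"
  and BBs: "\<And>Fs::nat \<Rightarrow> 'a set. (\<forall>n. finite (Fs n) \<and> Fs n \<subseteq> topspace X) \<Longrightarrow>
      \<not>(\<forall>x \<in> topspace X. eventually (\<lambda>n. x \<in> BB (Fs n)) sequentially)"
  shows "\<not> frechet_urysohn (Qp X Z)"
proof
  assume FU: "frechet_urysohn (Qp X Z)"
  define S0 where "S0 = {f \<in> extensional (topspace X). quasicontinuous_map X Z f}"
  define f where "f F = (\<lambda>x. if x \<in> topspace X then (if x \<in> BB F then a else b) else undefined)" for F
  define g where "g = (\<lambda>x. if x \<in> topspace X then a else undefined)"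
  define A where "A = f ` {F. finite F \<and> F \<subseteq> topspace X}"
  have tsQ: "topspace (Qp X Z) = (\<Pi>\<^sub>E i\<in>topspace X. topspace Z) \<inter> S0"
    unfolding Qp_def S0_def by simp
  have fS: "f F \<in> S0" "f F \<in> (\<Pi>\<^sub>E i\<in>topspace X. topspace Z)" if "finite F" "F \<subseteq> topspace X" for F
  proof -
    have B: "closedin X (BB F)" "F \<subseteq> BB F"
      "\<And>x U. x \<in> BB F \<Longrightarrow> openin X U \<Longrightarrow> x \<in> U \<Longrightarrow> \<exists>W. openin X W \<and> W \<noteq> {} \<and> W \<subseteq> U \<and> W \<subseteq> BB F"
      using BBp[OF that] by blast+
    show "f F \<in> (\<Pi>\<^sub>E i\<in>topspace X. topspace Z)" using ab unfolding f_def by auto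
    have "quasicontinuous_map X Z (f F)"
      unfolding quasicontinuous_map_def
    proof (intro conjI ballI allI impI)
      show "f F ` topspace X \<subseteq> topspace Z" using ab unfolding f_def by auto
    next
      fix x V U assume x: "x \<in> topspace X" and VU: "openin Z V \<and> f F x \<in> V \<and> openin X U \<and> x \<in> U"
      show "\<exists>W. openin X W \<and> W \<noteq> {} \<and> W \<subseteq> U \<and> f F ` W \<subseteq> V"
      proof (cases "x \<in> BB F")
        case True
        then obtain W where W: "openin X W" "W \<noteq> {}" "W \<subseteq> U" "W \<subseteq> BB F" using B(3) VU by blast
        have "f F ` W \<subseteq> V"
        proof
          fix y assume "y \<in> f F ` W"
          then obtain w where "w \<in> W" "y = f F w" by auto
          moreover have "w \<in> topspace X" using W openin_subset \<open>w \<in> W\<close> by blast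
          ultimately have "y = a" using W unfolding f_def by auto
          moreover have "f F x = a" using True x unfolding f_def by auto
          ultimately show "y \<in> V" using VU by simp
        qed
        then show ?thesis using W by blast
      next
        case False
        define W where "W = U - BB F"
        have "openin X W" unfolding W_def using VU B(1) by blast
        moreover have "x \<in> W" unfolding W_def using VU False by blast
        moreover have "f F ` W \<subseteq> V"
        proof
          fix y assume "y \<in> f F ` W"
          then obtain w where "w \<in> W" "y = f F w" by auto
          moreover have "w \<in> topspace X" using \<open>openin X W\<close> openin_subset \<open>w \<in> W\<close> by blast
          ultimately have "y = b" using W_def unfolding f_def by auto
          moreover have "f F x = b" using False x unfolding f_def by auto
          ultimately show "y \<in> V" using VU by simp
        qed
        ultimately show ?thesis unfolding W_def by blast
      qed
    qed
    moreover have "f F \<in> extensional (topspace X)" unfolding f_def by (simp add: extensional_def)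
    ultimately show "f F \<in> S0" unfolding S0_def by auto
  qed
  have Asub: "A \<subseteq> topspace (Qp X Z)" unfolding tsQ A_def using fS by auto
  have gS: "g \<in> S0" "g \<in> (\<Pi>\<^sub>E i\<in>topspace X. topspace Z)"
  proof -
    show "g \<in> (\<Pi>\<^sub>E i\<in>topspace X. topspace Z)" using ab unfolding g_def by auto
    have "quasicontinuous_map X Z g"
      unfolding quasicontinuous_map_def
    proof (intro conjI ballI allI impI)
      show "g ` topspace X \<subseteq> topspace Z" using ab unfolding g_def by auto
    next
      fix x V U assume x: "x \<in> topspace X" and VU: "openin Z V \<and> g x \<in> V \<and> openin X U \<and> x \<in> U"
      have "g ` U \<subseteq> V"
      proof
        fix y assume "y \<in> g ` U"
        then obtain w where "w \<in> U" "y = g w" by auto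
        moreover have "w \<in> topspace X" using VU openin_subset \<open>w \<in> U\<close> by blast
        ultimately show "y \<in> V" using VU x unfolding g_def by auto
      qed
      then show "\<exists>W. openin X W \<and> W \<noteq> {} \<and> W \<subseteq> U \<and> g ` W \<subseteq> V" using VU by blast
    qed
    moreover have "g \<in> extensional (topspace X)" unfolding g_def by (simp add: extensional_def)
    ultimately show "g \<in> S0" unfolding S0_def by auto
  qed
  have gcl: "g \<in> Qp X Z closure_of A"
    unfolding in_closure_of
  proof (intro conjI allI impI)
    show "g \<in> topspace (Qp X Z)" using gS tsQ by auto
  next
    fix T assume T: "g \<in> T \<and> openin (Qp X Z) T"
    then obtain T' where T': "openin (product_topology (\<lambda>_. Z) (topspace X)) T'" "T = T' \<inter> S0"
      unfolding Qp_def S0_def openin_subtopology by blast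
    then obtain U where U: "finite {i \<in> topspace X. U i \<noteq> topspace Z}"
      "\<forall>i \<in> topspace X. openin Z (U i)" "g \<in> Pi\<^sub>E (topspace X) U" "Pi\<^sub>E (topspace X) U \<subseteq> T'"
      using T unfolding openin_product_topology_alt by blast
    define F where "F = {i \<in> topspace X. U i \<noteq> topspace Z}"
    have F: "finite F" "F \<subseteq> topspace X" using U(1) unfolding F_def by auto
    have "f F \<in> Pi\<^sub>E (topspace X) U"
    proof (rule PiE_I)
      fix i assume i: "i \<in> topspace X"
      show "f F i \<in> U i"
      proof (cases "i \<in> F")
        case True
        then have "i \<in> BB F" using BBp[OF F] by blast
        then have "f F i = a" using i unfolding f_def by auto
        moreover have "g i = a" using i unfolding g_def by auto
        ultimately show ?thesis using U(3) i by (metis PiE_E)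
      next
        case False
        then have "U i = topspace Z" using i unfolding F_def by auto
        then show ?thesis using ab i unfolding f_def by auto
      qed
    next
      fix i assume "i \<notin> topspace X" then show "f F i = undefined" unfolding f_def by auto
    qed
    then have "f F \<in> T" using T' U(4) fS[OF F] by blast
    moreover have "f F \<in> A" unfolding A_def using F by blast
    ultimately show "\<exists>y. y \<in> A \<and> y \<in> T" by blast
  qed
  obtain \<sigma> where \<sigma>: "range \<sigma> \<subseteq> A" "limitin (Qp X Z) \<sigma> g sequentially"
    using FU Asub gcl unfolding frechet_urysohn_def by blast
  have "\<forall>n. \<exists>F. finite F \<and> F \<subseteq> topspace X \<and> \<sigma> n = f F"
    using \<sigma>(1) unfolding A_def by blast
  then obtain Fs where Fs: "\<And>n. finite (Fs n) \<and> Fs n \<subseteq> topspace X \<and> \<sigma> n = f (Fs n)" by metis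
  have lim: "limitin (product_topology (\<lambda>_. Z) (topspace X)) \<sigma> g sequentially"
    using \<sigma>(2) unfolding Qp_def limitin_subtopology by blast
  obtain U V where UV: "openin Z U" "openin Z V" "a \<in> U" "b \<in> V" "disjnt U V"
    using HZ ab unfolding Hausdorff_space_def by metis
  have "\<forall>x \<in> topspace X. eventually (\<lambda>n. x \<in> BB (Fs n)) sequentially"
  proof
    fix x assume x: "x \<in> topspace X"
    then have "limitin Z (\<lambda>n. \<sigma> n x) (g x) sequentially"
      using lim unfolding limitin_componentwise by blast
    moreover have "g x = a" using x unfolding g_def by auto
    ultimately have "eventually (\<lambda>n. \<sigma> n x \<in> U) sequentially"
      using UV unfolding limitin_def by auto
    then show "eventually (\<lambda>n. x \<in> BB (Fs n)) sequentially"
    proof (rule eventually_mono)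
      fix n assume "\<sigma> n x \<in> U"
      moreover have "b \<notin> U" using UV by (auto simp: disjnt_def)
      ultimately show "x \<in> BB (Fs n)" using Fs[of n] x unfolding f_def by (auto split: if_splits)
    qed
  qed
  then show False using BBs[of Fs] Fs by blast
qed



context Metric_space
begin

lemma t1M: "t1_space mtopology"
  by (simp add: Hausdorff_imp_t1_space Hausdorff_space_mtopology)

lemma finite_closedM: "finite S \<Longrightarrow> S \<subseteq> M \<Longrightarrow> closedin mtopology S"
  using t1M t1_space_closedin_finite topspace_mtopology by metis

lemma ball1:
  assumes G: "openin mtopology G" and x: "x \<in> mtopology closure_of G"
  shows "\<exists>Ob. openin mtopology Ob \<and> Ob \<subseteq> G \<and> x \<in> mtopology closure_of Ob \<and> mtopology closure_of Ob \<subseteq> insert x G"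
proof -
  have xM: "x \<in> M" using x closure_of_subset_topspace by fastforce
  have xcl: "\<forall>r>0. \<exists>y\<in>G. y \<in> mball x r" using x unfolding metric_closure_of by blast
  have "\<forall>k::nat. \<exists>c \<rho>. c \<in> G \<and> \<rho> > 0 \<and> mcball c \<rho> \<subseteq> G \<and> d x c + \<rho> < 1/(real k+1)"
  proof
    fix k::nat
    have pos: "(0::real) < 1/(real k+1)" by simp
    obtain c where c0: "c \<in> G" "c \<in> mball x (1/(real k+1))" using xcl pos by blast
    then have c: "c \<in> G" "d x c < 1/(real k+1)" by auto
    obtain r where r: "r>0" "mball c r \<subseteq> G" using G c(1) unfolding openin_mtopology by blast
    define \<rho> where "\<rho> = min (r/2) ((1/(real k+1) - d x c)/2)"
    have "\<rho> > 0" unfolding \<rho>_def using r c by auto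
    moreover have "mcball c \<rho> \<subseteq> G"
      using mcball_subset_mball_concentric[of \<rho> r c] r \<open>\<rho> > 0\<close> unfolding \<rho>_def by auto
    moreover have "d x c + \<rho> < 1/(real k+1)"
    proof -
      have "\<rho> \<le> (1/(real k+1) - d x c)/2" unfolding \<rho>_def by linarith
      moreover have "\<And>t a r::real. r \<le> (t - a)/2 \<Longrightarrow> a < t \<Longrightarrow> a + r < t" by (simp add: field_simps)
      ultimately show ?thesis using c by blast
    qed
    ultimately show "\<exists>c \<rho>. c \<in> G \<and> \<rho> > 0 \<and> mcball c \<rho> \<subseteq> G \<and> d x c + \<rho> < 1/(real k+1)"
      using c by blast
  qed
  then obtain c \<rho> where cr: "\<And>k. c k \<in> G \<and> \<rho> k > 0 \<and> mcball (c k) (\<rho> k) \<subseteq> G \<and> d x (c k) + \<rho> k < 1/(real k+1)"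
    by metis
  have GM: "G \<subseteq> M" using G openin_subset by fastforce
  define Ob where "Ob = (\<Union>k. mball (c k) (\<rho> k))"
  have Oo: "openin mtopology Ob" unfolding Ob_def by (auto intro: openin_Union)
  have OG: "Ob \<subseteq> G"
  proof -
    have "mball (c k) (\<rho> k) \<subseteq> G" for k using cr[of k] mball_subset_mcball[of "c k" "\<rho> k"] by (meson order_trans)
    then show ?thesis unfolding Ob_def by blast
  qed
  have xO: "x \<in> mtopology closure_of Ob"
    unfolding metric_closure_of
  proof (intro CollectI conjI allI impI xM)
    fix r::real assume "r > 0"
    then obtain k where k: "inverse (real (Suc k)) < r" using reals_Archimedean by blast
    have "c k \<in> mball (c k) (\<rho> k)" using cr[of k] GM by auto
    then have "c k \<in> Ob" unfolding Ob_def by blast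
    moreover have "d x (c k) < r"
    proof -
      have "d x (c k) + \<rho> k < 1/(real k+1)" using cr[of k] by simp
      moreover have "1/(real k+1) = inverse (real (Suc k))" by (simp add: inverse_eq_divide add.commute)
      ultimately show ?thesis using k cr[of k] by linarith
    qed
    ultimately show "\<exists>y\<in>Ob. y \<in> mball x r" using xM GM cr[of k] by auto
  qed
  have "mtopology closure_of Ob \<subseteq> insert x G"
  proof
    fix y assume y: "y \<in> mtopology closure_of Ob"
    show "y \<in> insert x G"
    proof (cases "y = x")
      case True then show ?thesis by simp
    next
      case False
      have yM: "y \<in> M" using y closure_of_subset_topspace by fastforce
      define \<delta> where "\<delta> = d x y"
      have \<delta>: "\<delta> > 0" unfolding \<delta>_def using False xM yM by auto
      then obtain K where K: "inverse (real (Suc K)) < \<delta>/2" using reals_Archimedean half_gt_zero by blast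
      define C where "C = (\<Union>k\<in>{..<K}. mcball (c k) (\<rho> k))"
      have Cc: "closedin mtopology C" unfolding C_def by (intro closedin_Union) auto
      have CG: "C \<subseteq> G" unfolding C_def using cr by (simp add: UN_least)
      have "y \<in> mtopology closure_of C"
        unfolding metric_closure_of
      proof (intro CollectI conjI allI impI yM)
        fix r::real assume "r > 0"
        then have "min r (\<delta>/2) > 0" using \<delta> by simp
        then obtain z where z: "z \<in> Ob" "z \<in> mball y (min r (\<delta>/2))"
          using y unfolding metric_closure_of by blast
        then obtain k where zk: "z \<in> mball (c k) (\<rho> k)" unfolding Ob_def by blast
        have "k < K"
        proof (rule ccontr)
          assume "\<not> k < K"
          then have "inverse (real (Suc k)) \<le> inverse (real (Suc K))"
            by (simp add: le_imp_inverse_le)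
          moreover have "d x z \<le> d x (c k) + d (c k) z" using zk xM by (simp add: triangle)
          moreover have "d (c k) z < \<rho> k" using zk by simp
          moreover have "d x (c k) + \<rho> k < inverse (real (Suc k))" using cr[of k]
            by (simp add: inverse_eq_divide add.commute)
          moreover have "d x y \<le> d x z + d z y" using z zk xM by (simp add: triangle)
          moreover have "d z y < \<delta>/2" using z by (simp add: commute)
          ultimately show False using K unfolding \<delta>_def by linarith
        qed
        then have "z \<in> C" unfolding C_def using zk mball_subset_mcball[of "c k" "\<rho> k"] by auto
        moreover have "z \<in> mball y r" using z by auto
        ultimately show "\<exists>z\<in>C. z \<in> mball y r" by blast
      qed
      then have "y \<in> C" using closure_of_closedin[OF Cc] by simp
      then show ?thesis using CG by blast
    qed
  qed
  then show ?thesis using Oo OG xO by blast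
qed

lemma ballF:
  assumes G: "openin mtopology G" and F: "finite F" "F \<subseteq> mtopology closure_of G"
  shows "\<exists>Ob. openin mtopology Ob \<and> Ob \<subseteq> G \<and> F \<subseteq> mtopology closure_of Ob \<and> mtopology closure_of Ob \<subseteq> F \<union> G"
proof -
  have "\<forall>x\<in>F. \<exists>Ob. openin mtopology Ob \<and> Ob \<subseteq> G \<and> x \<in> mtopology closure_of Ob \<and> mtopology closure_of Ob \<subseteq> insert x G"
    using ball1[OF G] F by blast
  then obtain Obf where Obf: "\<And>x. x \<in> F \<Longrightarrow> openin mtopology (Obf x) \<and> Obf x \<subseteq> G \<and> x \<in> mtopology closure_of (Obf x) \<and> mtopology closure_of (Obf x) \<subseteq> insert x G"
    by metis
  define Ob where "Ob = \<Union> (Obf ` F)"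
  have "openin mtopology Ob" unfolding Ob_def using Obf by (auto intro: openin_Union)
  moreover have "Ob \<subseteq> G" unfolding Ob_def using Obf by blast
  moreover have cl: "mtopology closure_of Ob = (\<Union>x\<in>F. mtopology closure_of (Obf x))"
    unfolding Ob_def using F(1) by (simp add: closure_of_Union)
  moreover have "F \<subseteq> mtopology closure_of Ob" unfolding cl using Obf by blast
  moreover have "mtopology closure_of Ob \<subseteq> F \<union> G" unfolding cl using Obf by blast
  ultimately show ?thesis by blast
qed

lemma BBone:
  assumes G: "openin mtopology G" and F: "finite F" "F \<subseteq> M"
    and cl: "\<And>x. x \<in> F \<Longrightarrow> \<not> openin mtopology {x} \<Longrightarrow> x \<in> mtopology closure_of G"
  shows "\<exists>B. closedin mtopology B \<and> F \<subseteq> B \<and> B \<subseteq> F \<union> G \<and>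
     (\<forall>x\<in>B. \<forall>U. openin mtopology U \<and> x \<in> U \<longrightarrow> (\<exists>W. openin mtopology W \<and> W \<noteq> {} \<and> W \<subseteq> U \<and> W \<subseteq> B))"
proof -
  define F' where "F' = {x\<in>F. \<not> openin mtopology {x}}"
  have "finite F'" unfolding F'_def using F(1) by simp
  moreover have "F' \<subseteq> mtopology closure_of G" unfolding F'_def using cl by blast
  ultimately obtain Ob where Ob: "openin mtopology Ob" "Ob \<subseteq> G" "F' \<subseteq> mtopology closure_of Ob"
    "mtopology closure_of Ob \<subseteq> F' \<union> G"
    using ballF[OF G] by metis
  define B where "B = F \<union> mtopology closure_of Ob"
  have "closedin mtopology B" unfolding B_def using finite_closedM[OF F] closedin_closure_of by (intro closedin_Un) 
  moreover have "F \<subseteq> B" unfolding B_def by auto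
  moreover have "B \<subseteq> F \<union> G"
  proof -
    have "F' \<subseteq> F" unfolding F'_def by blast
    then show ?thesis unfolding B_def using Ob(4) by blast
  qed
  moreover have "\<forall>x\<in>B. \<forall>U. openin mtopology U \<and> x \<in> U \<longrightarrow> (\<exists>W. openin mtopology W \<and> W \<noteq> {} \<and> W \<subseteq> U \<and> W \<subseteq> B)"
  proof (intro ballI allI impI)
    fix x U assume x: "x \<in> B" and U: "openin mtopology U \<and> x \<in> U"
    show "\<exists>W. openin mtopology W \<and> W \<noteq> {} \<and> W \<subseteq> U \<and> W \<subseteq> B"
    proof (cases "x \<in> mtopology closure_of Ob")
      case True
      then obtain y where "y \<in> Ob" "y \<in> U" using U unfolding in_closure_of by blast
      moreover have "Ob \<subseteq> B"
      proof -
        have "Ob \<subseteq> M" using Ob(1) openin_subset by fastforce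
        then have "Ob \<subseteq> mtopology closure_of Ob" using closure_of_subset[of Ob mtopology] by simp
        then show ?thesis unfolding B_def by blast
      qed
      moreover have "openin mtopology (U \<inter> Ob)" using U Ob(1) by (simp add: openin_Int)
      ultimately show ?thesis by (intro exI[of _ "U \<inter> Ob"]) blast
    next
      case False
      then have "x \<in> F" "x \<notin> F'" using x Ob(3) unfolding B_def by auto
      then have "openin mtopology {x}" unfolding F'_def by auto
      then show ?thesis using U x by (intro exI[of _ "{x}"]) blast
    qed
  qed
  ultimately show ?thesis by blast
qed

end



context Metric_space
begin

lemma BBfun:
  assumes "\<And>F. finite F \<Longrightarrow> F \<subseteq> M \<Longrightarrow> openin mtopology (GF F) \<and>
     (\<forall>x\<in>F. \<not> openin mtopology {x} \<longrightarrow> x \<in> mtopology closure_of (GF F))"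
  shows "\<exists>BB. \<forall>F. finite F \<and> F \<subseteq> M \<longrightarrow> closedin mtopology (BB F) \<and> F \<subseteq> BB F \<and> BB F \<subseteq> F \<union> GF F \<and>
     (\<forall>x\<in>BB F. \<forall>U. openin mtopology U \<and> x \<in> U \<longrightarrow> (\<exists>W. openin mtopology W \<and> W \<noteq> {} \<and> W \<subseteq> U \<and> W \<subseteq> BB F))"
proof -
  have "\<forall>F. \<exists>B. finite F \<and> F \<subseteq> M \<longrightarrow> closedin mtopology B \<and> F \<subseteq> B \<and> B \<subseteq> F \<union> GF F \<and>
     (\<forall>x\<in>B. \<forall>U. openin mtopology U \<and> x \<in> U \<longrightarrow> (\<exists>W. openin mtopology W \<and> W \<noteq> {} \<and> W \<subseteq> U \<and> W \<subseteq> B))"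
  proof
    fix F
    show "\<exists>B. finite F \<and> F \<subseteq> M \<longrightarrow> closedin mtopology B \<and> F \<subseteq> B \<and> B \<subseteq> F \<union> GF F \<and>
     (\<forall>x\<in>B. \<forall>U. openin mtopology U \<and> x \<in> U \<longrightarrow> (\<exists>W. openin mtopology W \<and> W \<noteq> {} \<and> W \<subseteq> U \<and> W \<subseteq> B))"
    proof (cases "finite F \<and> F \<subseteq> M")
      case True
      then have "openin mtopology (GF F)" "\<And>x. x \<in> F \<Longrightarrow> \<not> openin mtopology {x} \<Longrightarrow> x \<in> mtopology closure_of (GF F)"
        using assms by blast+
      from BBone[OF this(1) _ _ this(2)] True show ?thesis by metis
    qed blast
  qed
  then show ?thesis by metis
qed

lemma caseA:
  assumes HZ: "Hausdorff_space Z" and ab: "a \<in> topspace Z" "b \<in> topspace Z" "a \<noteq> b"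
    and N: "closedin mtopology N" "uncountable N" "\<And>x. x \<in> mtopology interior_of N \<Longrightarrow> openin mtopology {x}"
  shows "\<not> frechet_urysohn (Qp mtopology Z)"
proof -
  define GF where "GF F = M - N" for F :: "'a set"
  have "openin mtopology (GF F) \<and> (\<forall>x\<in>F. \<not> openin mtopology {x} \<longrightarrow> x \<in> mtopology closure_of (GF F))"
    if "finite F" "F \<subseteq> M" for F
  proof
    show "openin mtopology (GF F)" unfolding GF_def using N(1)
      by (metis closedin_def topspace_mtopology)
    show "\<forall>x\<in>F. \<not> openin mtopology {x} \<longrightarrow> x \<in> mtopology closure_of GF F"
    proof (intro ballI impI)
      fix x assume "x \<in> F" "\<not> openin mtopology {x}"
      then have "x \<in> M" "x \<notin> mtopology interior_of N" using that N(3) by blast+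
      then show "x \<in> mtopology closure_of GF F" unfolding GF_def
        using closure_of_complement[of mtopology N] by simp
    qed
  qed
  then obtain BB where BB: "\<And>F. finite F \<Longrightarrow> F \<subseteq> M \<Longrightarrow> closedin mtopology (BB F) \<and> F \<subseteq> BB F \<and> BB F \<subseteq> F \<union> GF F \<and>
     (\<forall>x\<in>BB F. \<forall>U. openin mtopology U \<and> x \<in> U \<longrightarrow> (\<exists>W. openin mtopology W \<and> W \<noteq> {} \<and> W \<subseteq> U \<and> W \<subseteq> BB F))"
    using BBfun[of GF] by metis
  show ?thesis
  proof (rule GEN[OF HZ ab, of mtopology BB])
    fix F assume "finite F" "F \<subseteq> topspace mtopology"
    then show "closedin mtopology (BB F) \<and> F \<subseteq> BB F \<and>
      (\<forall>x \<in> BB F. \<forall>U. openin mtopology U \<and> x \<in> U \<longrightarrow> (\<exists>W. openin mtopology W \<and> W \<noteq> {} \<and> W \<subseteq> U \<and> W \<subseteq> BB F))"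
      using BB by simp
  next
    fix Fs :: "nat \<Rightarrow> 'a set"
    assume Fs: "\<forall>n. finite (Fs n) \<and> Fs n \<subseteq> topspace mtopology"
    have "countable (\<Union>n. Fs n)" using Fs by (simp add: countable_finite)
    then have "\<not> N \<subseteq> (\<Union>n. Fs n)" using N(2) countable_subset by blast
    then obtain x where x: "x \<in> N" "\<And>n. x \<notin> Fs n" by blast
    have xM: "x \<in> M" using x N(1) closedin_subset by fastforce
    have xn: "x \<notin> BB (Fs n)" for n
    proof -
      have "BB (Fs n) \<subseteq> Fs n \<union> GF (Fs n)" using BB Fs by simp
      then show ?thesis using x unfolding GF_def by blast
    qed
    show "\<not> (\<forall>x \<in> topspace mtopology. eventually (\<lambda>n. x \<in> BB (Fs n)) sequentially)"
    proof
      assume "\<forall>x \<in> topspace mtopology. eventually (\<lambda>n. x \<in> BB (Fs n)) sequentially"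
      then have "eventually (\<lambda>n. x \<in> BB (Fs n)) sequentially" using xM by simp
      then obtain n where "x \<in> BB (Fs n)" using eventually_sequentially by (metis order_refl)
      then show False using xn by blast
    qed
  qed
qed

end



context Metric_space
begin

definition sep :: "real \<Rightarrow> 'a set \<Rightarrow> bool" where
  "sep e S \<longleftrightarrow> S \<subseteq> M \<and> (\<forall>x\<in>S. \<forall>y\<in>S. x \<noteq> y \<longrightarrow> e \<le> d x y)"

lemma maximal_sep:
  assumes "e > 0"
  shows "\<exists>S. sep e S \<and> (\<forall>x\<in>M. \<exists>s\<in>S. d x s < e)"
proof -
  define A where "A = {S. sep e S}"
  have "\<forall>C\<in>chains A. \<Union>C \<in> A"
  proof
    fix C assume C: "C \<in> chains A"
    then have CA: "C \<subseteq> A" and ch: "\<forall>x\<in>C. \<forall>y\<in>C. x \<subseteq> y \<or> y \<subseteq> x"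
      unfolding chains_def chain_subset_def by auto
    have "\<Union>C \<subseteq> M" using CA unfolding A_def sep_def by blast
    moreover have "\<forall>x\<in>\<Union>C. \<forall>y\<in>\<Union>C. x \<noteq> y \<longrightarrow> e \<le> d x y"
    proof (intro ballI impI)
      fix x y assume x: "x \<in> \<Union>C" and y: "y \<in> \<Union>C" and xy: "x \<noteq> y"
      then obtain S1 S2 where S: "S1 \<in> C" "S2 \<in> C" "x \<in> S1" "y \<in> S2" by blast
      then have "S1 \<subseteq> S2 \<or> S2 \<subseteq> S1" using ch by blast
      then obtain S3 where "S3 \<in> C" "x \<in> S3" "y \<in> S3" using S by blast
      then have "sep e S3" using CA unfolding A_def by blast
      then show "e \<le> d x y" using \<open>x \<in> S3\<close> \<open>y \<in> S3\<close> xy unfolding sep_def by blast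
    qed
    ultimately show "\<Union>C \<in> A" unfolding A_def sep_def by blast
  qed
  then obtain S where S: "S \<in> A" "\<And>T. T \<in> A \<Longrightarrow> S \<subseteq> T \<Longrightarrow> T = S"
    using Zorn_Lemma[of A] by blast
  have "\<exists>s\<in>S. d x s < e" if x: "x \<in> M" for x
  proof (rule ccontr)
    assume "\<not> (\<exists>s\<in>S. d x s < e)"
    then have far: "\<And>s. s \<in> S \<Longrightarrow> e \<le> d x s" by force
    have "x \<notin> S" using far[of x] x assms by auto
    have "sep e (insert x S)"
      unfolding sep_def
    proof (intro conjI ballI impI)
      show "insert x S \<subseteq> M" using S(1) x unfolding A_def sep_def by blast
    next
      fix u v assume u: "u \<in> insert x S" and v: "v \<in> insert x S" and uv: "u \<noteq> v"
      show "e \<le> d u v"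
      proof (cases "u = x")
        case True
        then have "v \<in> S" using v uv by blast
        then show ?thesis using far True by blast
      next
        case False
        then have uS: "u \<in> S" using u by blast
        show ?thesis
        proof (cases "v = x")
          case True
          then show ?thesis using far[OF uS] commute by simp
        next
          case False
          then have "v \<in> S" using v by blast
          then show ?thesis using uS uv S(1) unfolding A_def sep_def by blast
        qed
      qed
    qed
    then have "insert x S = S" using S(2)[of "insert x S"] unfolding A_def by blast
    then show False using \<open>x \<notin> S\<close> by blast
  qed
  then show ?thesis using S(1) unfolding A_def by blast
qed

lemma sep_closed:
  assumes "e > 0" "sep e S"
  shows "closedin mtopology S"
  unfolding closedin_metric
proof (intro conjI allI impI)
  show SM: "S \<subseteq> M" using assms unfolding sep_def by blast
next
  fix x assume x: "x \<in> M - S"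
  show "\<exists>r>0. disjnt S (mball x r)"
  proof (rule ccontr)
    assume H: "\<not> (\<exists>r>0. disjnt S (mball x r))"
    have H': "\<exists>s\<in>S. s \<in> mball x r" if "r > 0" for r
    proof -
      have "\<not> disjnt S (mball x r)" using H that by blast
      then show ?thesis unfolding disjnt_def by auto
    qed
    have "e/2 > 0" using assms by simp
    then obtain s1 where s1: "s1 \<in> S" "s1 \<in> mball x (e/2)" using H' by blast
    then have "s1 \<noteq> x" using x by blast
    moreover have "s1 \<in> M" using s1(2) by simp
    ultimately have "d x s1 \<noteq> 0" using x zero by blast
    then have "d x s1 > 0" using nonneg[of x s1] by linarith
    then obtain s2 where s2: "s2 \<in> S" "s2 \<in> mball x (d x s1)" using H' by blast
    then have s21: "s2 \<noteq> s1" by auto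
    have sepS: "\<forall>u\<in>S. \<forall>v\<in>S. u \<noteq> v \<longrightarrow> e \<le> d u v" using assms(2) sep_def by simp
    have "e \<le> d s1 s2" using sepS s1(1) s2(1) s21 by simp
    moreover have "d s1 s2 \<le> d s1 x + d x s2" using s1 s2 x by (simp add: triangle)
    moreover have "d s1 x < e/2" using s1 commute[of s1 x] by simp
    moreover have "d x s2 < e/2" using s1 s2 by simp
    ultimately show False by linarith
  qed
qed

lemma sep_interior:
  assumes "e > 0" "sep e S" "x \<in> mtopology interior_of S"
  shows "openin mtopology {x}"
proof -
  obtain r where r: "r > 0" "mball x r \<subseteq> S" "x \<in> M" using assms(3) in_interior_of_mball by blast
  have xS: "x \<in> S" using r by auto
  have "mball x (min r e) = {x}"
  proof
    show "mball x (min r e) \<subseteq> {x}"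
    proof
      fix y assume y: "y \<in> mball x (min r e)"
      then have "y \<in> S" using r by auto
      moreover have "d x y < e" using y by auto
      ultimately show "y \<in> {x}" using xS assms(2) unfolding sep_def by force
    qed
    show "{x} \<subseteq> mball x (min r e)" using r assms by auto
  qed
  then show ?thesis by (metis openin_mball)
qed

end



context Metric_space
begin

lemma Iso_open: "openin mtopology {x\<in>M. openin mtopology {x}}"
proof -
  have "{x\<in>M. openin mtopology {x}} = \<Union> {{x} | x. x \<in> M \<and> openin mtopology {x}}" by blast
  moreover have "openin mtopology (\<Union> {{x} | x. x \<in> M \<and> openin mtopology {x}})"
    by (rule openin_Union) blast
  ultimately show ?thesis by simp
qed

lemma exists_acc:
  assumes unc: "uncountable M"
    and H: "\<And>N. closedin mtopology N \<Longrightarrow> (\<And>x. x \<in> mtopology interior_of N \<Longrightarrow> openin mtopology {x}) \<Longrightarrow> countable N"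
  shows "\<exists>S. (\<forall>k. countable (S k) \<and> sep (1/(real k+1)) (S k) \<and> (\<forall>x\<in>M. \<exists>s\<in>S k. d x s < 1/(real k+1)))
     \<and> (\<exists>p\<in>M. \<not> openin mtopology {p} \<and> (\<forall>r>0. \<exists>y\<in>M. \<not> openin mtopology {y} \<and> y \<noteq> p \<and> d p y < r))"
proof -
  have "\<forall>k. \<exists>S. sep (1/(real k+1)) S \<and> (\<forall>x\<in>M. \<exists>s\<in>S. d x s < 1/(real k+1))"
  proof
    fix k :: nat
    have "(0::real) < 1/(real k+1)" by simp
    then show "\<exists>S. sep (1/(real k+1)) S \<and> (\<forall>x\<in>M. \<exists>s\<in>S. d x s < 1/(real k+1))"
      by (rule maximal_sep)
  qed
  then obtain S where S: "\<And>k. sep (1/(real k+1)) (S k)" "\<And>k. \<forall>x\<in>M. \<exists>s\<in>S k. d x s < 1/(real k+1)"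
    by metis
  have Sc: "countable (S k)" for k
  proof (rule H)
    have "(0::real) < 1/(real k+1)" by simp
    then show "closedin mtopology (S k)" using sep_closed S(1) by blast
    fix x assume "x \<in> mtopology interior_of S k"
    then show "openin mtopology {x}" using sep_interior S(1) \<open>(0::real) < 1/(real k+1)\<close> by blast
  qed
  define Iso where "Iso = {x\<in>M. openin mtopology {x}}"
  have "Iso \<subseteq> (\<Union>k. S k)"
  proof
    fix x assume "x \<in> Iso"
    then have x: "x \<in> M" "openin mtopology {x}" unfolding Iso_def by auto
    then obtain r where r: "r > 0" "mball x r \<subseteq> {x}" unfolding openin_mtopology by blast
    then obtain k where k: "inverse (real (Suc k)) < r" using reals_Archimedean by blast
    obtain s where s: "s \<in> S k" "d x s < 1/(real k+1)" using S(2)[of k] x by blast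
    have "inverse (real (Suc k)) = 1/(real k+1)" by (simp add: inverse_eq_divide add.commute)
    then have "d x s < r" using s k by linarith
    moreover have "s \<in> M" using S(1)[of k] s unfolding sep_def by blast
    ultimately have "s \<in> mball x r" using x by simp
    then have "s = x" using r by blast
    then show "x \<in> (\<Union>k. S k)" using s by blast
  qed
  moreover have "countable (\<Union>k. S k)" using Sc by (simp add: countable_UN)
  ultimately have Ic: "countable Iso" using countable_subset by blast
  define P where "P = M - Iso"
  have Pc: "closedin mtopology P" unfolding P_def Iso_def
    using Iso_open by (intro closedin_diff closedin_mspace)
  have "M = Iso \<union> P" unfolding P_def Iso_def by auto
  have Pu: "uncountable P"
  proof
    assume "countable P"
    then have "countable (Iso \<union> P)" using Ic by simp
    then show False using unc \<open>M = Iso \<union> P\<close> by simp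
  qed
  have "\<exists>p\<in>P. \<forall>r>0. \<exists>y\<in>P. y \<noteq> p \<and> d p y < r"
  proof (rule ccontr)
    assume nacc: "\<not> (\<exists>p\<in>P. \<forall>r>0. \<exists>y\<in>P. y \<noteq> p \<and> d p y < r)"
    have "countable P"
    proof (rule H[OF Pc])
      fix x assume x: "x \<in> mtopology interior_of P"
      then obtain r1 where r1: "r1 > 0" "mball x r1 \<subseteq> P" "x \<in> M" using in_interior_of_mball by blast
      have xP: "x \<in> P" using r1 by auto
      then obtain r2 where r2: "r2 > 0" "\<And>y. y \<in> P \<Longrightarrow> y \<noteq> x \<Longrightarrow> \<not> d x y < r2" using nacc by blast
      have "mball x (min r1 r2) = {x}"
      proof
        show "mball x (min r1 r2) \<subseteq> {x}"
        proof
          fix y assume y: "y \<in> mball x (min r1 r2)"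
          then have "y \<in> P" using r1 by auto
          moreover have "d x y < r2" using y by simp
          ultimately show "y \<in> {x}" using r2(2) by blast
        qed
        show "{x} \<subseteq> mball x (min r1 r2)" using r1 r2 by simp
      qed
      then show "openin mtopology {x}" by (metis openin_mball)
    qed
    then show False using Pu by blast
  qed
  then obtain p where p: "p \<in> P" "\<And>r. r > 0 \<Longrightarrow> \<exists>y\<in>P. y \<noteq> p \<and> d p y < r" by blast
  have "\<exists>p\<in>M. \<not> openin mtopology {p} \<and> (\<forall>r>0. \<exists>y\<in>M. \<not> openin mtopology {y} \<and> y \<noteq> p \<and> d p y < r)"
  proof -
    have pM: "p \<in> M" "\<not> openin mtopology {p}" using p(1) unfolding P_def Iso_def by auto
    have "\<exists>y\<in>M. \<not> openin mtopology {y} \<and> y \<noteq> p \<and> d p y < r" if "r > 0" for r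
    proof -
      obtain y where "y \<in> P" "y \<noteq> p" "d p y < r" using p(2) \<open>r > 0\<close> by blast
      then show ?thesis unfolding P_def Iso_def by blast
    qed
    then show ?thesis using pM by (intro bexI[of _ p]) auto
  qed
  moreover have "\<forall>k. countable (S k) \<and> sep (1/(real k+1)) (S k) \<and> (\<forall>x\<in>M. \<exists>s\<in>S k. d x s < 1/(real k+1))"
    using S Sc by simp
  ultimately show ?thesis by (intro exI[of _ S]) simp
qed

lemma disc_seq:
  assumes pM: "p \<in> M" and pacc: "\<forall>r>0. \<exists>y\<in>M. \<not> openin mtopology {y} \<and> y \<noteq> p \<and> d p y < r"
  shows "\<exists>w::nat \<Rightarrow> 'a. (\<forall>k. w k \<in> M \<and> \<not> openin mtopology {w k}) \<and> inj w \<and>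
           mtopology interior_of (mtopology closure_of (range w)) = {}"
proof -
  have "\<forall>x. \<exists>y. (x \<in> M \<and> x \<noteq> p) \<longrightarrow> (y \<in> M \<and> \<not> openin mtopology {y} \<and> y \<noteq> p \<and> d p y < d p x / 2)"
  proof
    fix x
    show "\<exists>y. (x \<in> M \<and> x \<noteq> p) \<longrightarrow> (y \<in> M \<and> \<not> openin mtopology {y} \<and> y \<noteq> p \<and> d p y < d p x / 2)"
    proof (cases "x \<in> M \<and> x \<noteq> p")
      case True
      then have "d p x > 0" using pM by auto
      then have "d p x / 2 > 0" by simp
      then obtain y where "y \<in> M" "\<not> openin mtopology {y}" "y \<noteq> p" "d p y < d p x / 2"
        using pacc by blast
      then show ?thesis by blast
    qed blast
  qed
  then obtain nxt where nxt: "\<And>x. x \<in> M \<Longrightarrow> x \<noteq> p \<Longrightarrow>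
      nxt x \<in> M \<and> \<not> openin mtopology {nxt x} \<and> nxt x \<noteq> p \<and> d p (nxt x) < d p x / 2"
    by metis
  obtain w0 where w0: "w0 \<in> M" "\<not> openin mtopology {w0}" "w0 \<noteq> p"
    using pacc by (meson zero_less_one)
  define w where "w k = (nxt ^^ k) w0" for k
  have wS: "w (Suc k) = nxt (w k)" for k unfolding w_def by simp
  have W: "w k \<in> M \<and> \<not> openin mtopology {w k} \<and> w k \<noteq> p" for k
  proof (induction k)
    case 0 then show ?case using w0 unfolding w_def by simp
  next
    case (Suc k) then show ?case using nxt[of "w k"] wS[of k] by simp
  qed
  define \<delta> where "\<delta> k = d p (w k)" for k
  have \<delta>pos: "\<delta> k > 0" for k unfolding \<delta>_def using W[of k] pM by auto
  have \<delta>S: "\<delta> (Suc k) < \<delta> k / 2" for k unfolding \<delta>_def using nxt[of "w k"] W[of k] wS[of k] by simp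
  have \<delta>mono: "\<delta> j \<le> \<delta> i" if "i \<le> j" for i j
  proof -
    have "\<delta> (Suc n) \<le> \<delta> n" for n using \<delta>S[of n] \<delta>pos[of n] by linarith
    then show ?thesis using lift_Suc_antimono_le[of \<delta>] that by blast
  qed
  have sepw: "\<delta> k / 2 \<le> d (w k) (w i)" if "i \<noteq> k" for i k
  proof (cases "k < i")
    case True
    then have "\<delta> i \<le> \<delta> (Suc k)" using \<delta>mono by simp
    then have "\<delta> i < \<delta> k / 2" using \<delta>S[of k] by linarith
    moreover have "\<delta> k \<le> \<delta> i + d (w i) (w k)" unfolding \<delta>_def using triangle[of p "w i" "w k"] W[of i] W[of k] pM by simp
    moreover have "d (w i) (w k) = d (w k) (w i)" by (rule commute)
    ultimately show ?thesis by linarith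
  next
    case False
    then have "i < k" using that by simp
    then have "\<delta> k \<le> \<delta> (Suc i)" using \<delta>mono by simp
    then have "\<delta> k < \<delta> i / 2" using \<delta>S[of i] by linarith
    moreover have "\<delta> i \<le> \<delta> k + d (w k) (w i)" unfolding \<delta>_def using triangle[of p "w k" "w i"] W[of i] W[of k] pM by simp
    ultimately show ?thesis using \<delta>pos[of k] by linarith
  qed
  have injw: "inj w"
  proof (rule injI)
    fix i k assume eq: "w i = w k"
    show "i = k"
    proof (rule ccontr)
      assume "i \<noteq> k"
      then have "\<delta> k / 2 \<le> d (w k) (w i)" using sepw by blast
      moreover have "d (w k) (w i) = 0" using eq W by simp
      ultimately show False using \<delta>pos[of k] by linarith
    qed
  qed
  have "mtopology interior_of (mtopology closure_of (range w)) = {}"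
  proof (rule ccontr)
    assume "mtopology interior_of (mtopology closure_of (range w)) \<noteq> {}"
    then obtain y where y: "y \<in> mtopology interior_of (mtopology closure_of (range w))" by blast
    define U where "U = mtopology interior_of (mtopology closure_of (range w))"
    have Uo: "openin mtopology U" unfolding U_def by simp
    have Ucl: "U \<subseteq> mtopology closure_of (range w)" unfolding U_def by (rule interior_of_subset)
    have "y \<in> mtopology closure_of (range w)" using y Ucl unfolding U_def by blast
    then have "\<exists>z. z \<in> range w \<and> z \<in> U" using Uo y in_closure_of[of y mtopology "range w"] unfolding U_def by blast
    then obtain k where k: "w k \<in> U" by blast
    define V where "V = U \<inter> mball (w k) (\<delta> k / 2)"
    have Vo: "openin mtopology V" unfolding V_def using Uo by (simp add: openin_Int)
    have wkV: "w k \<in> V" unfolding V_def using k W[of k] \<delta>pos[of k] by simp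
    have "V \<noteq> {w k}"
    proof
      assume "V = {w k}"
      then show False using W[of k] Vo by simp
    qed
    then obtain z where z: "z \<in> V" "z \<noteq> w k" using wkV by blast
    define V' where "V' = V - {w k}"
    have "closedin mtopology {w k}" using finite_closedM[of "{w k}"] W[of k] by simp
    then have V'o: "openin mtopology V'" unfolding V'_def using Vo by (simp add: openin_diff)
    have "z \<in> V'" unfolding V'_def using z by simp
    moreover have "z \<in> mtopology closure_of (range w)" using z Ucl unfolding V_def by blast
    ultimately have "\<exists>y. y \<in> range w \<and> y \<in> V'" using V'o in_closure_of[of z mtopology "range w"] by blast
    then obtain i where i: "w i \<in> V'" by blast
    then have "d (w k) (w i) < \<delta> k / 2" unfolding V'_def V_def by simp
    then have "i = k" using sepw[of i k] by linarith
    then show False using i unfolding V'_def by simp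
  qed
  note emp = this
  show ?thesis
    apply (rule exI[of _ w])
    using W injw emp by simp
qed

end



context Metric_space
begin

lemma open_nonisol_avoid:
  assumes V: "openin mtopology V" "z \<in> V" "\<not> openin mtopology {z}" and F: "finite F"
  shows "\<exists>q\<in>V. q \<notin> F"
proof -
  define K where "K = (F \<inter> M) - {z}"
  have "finite K" "K \<subseteq> M" unfolding K_def using F by auto
  then have "closedin mtopology K" by (rule finite_closedM)
  then have V'o: "openin mtopology (V - K)" using V(1) by (simp add: openin_diff)
  have zV': "z \<in> V - K" unfolding K_def using V(2) by simp
  have "V - K \<noteq> {z}"
  proof
    assume "V - K = {z}"
    then show False using V'o V(3) by simp
  qed
  then obtain q where q: "q \<in> V - K" "q \<noteq> z" using zV' by blast
  have "q \<in> M" using q(1) V(1) openin_subset by fastforce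
  then have "q \<notin> F" using q unfolding K_def by blast
  then show ?thesis using q(1) by blast
qed

lemma caseB:
  assumes HZ: "Hausdorff_space Z" and ab: "a \<in> topspace Z" "b \<in> topspace Z" "a \<noteq> b"
    and unc: "uncountable M"
    and H: "\<And>N. closedin mtopology N \<Longrightarrow> (\<And>x. x \<in> mtopology interior_of N \<Longrightarrow> openin mtopology {x}) \<Longrightarrow> countable N"
  shows "\<not> frechet_urysohn (Qp mtopology Z)"
proof -
  obtain S p where S: "\<And>k. countable (S k) \<and> sep (1/(real k+1)) (S k) \<and> (\<forall>x\<in>M. \<exists>s\<in>S k. d x s < 1/(real k+1))"
    and p: "p \<in> M" "\<not> openin mtopology {p}" "\<forall>r>0. \<exists>y\<in>M. \<not> openin mtopology {y} \<and> y \<noteq> p \<and> d p y < r"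
    using exists_acc[OF unc H] by metis
  obtain w :: "nat \<Rightarrow> 'a" where w: "\<And>k. w k \<in> M \<and> \<not> openin mtopology {w k}" "inj w"
      "mtopology interior_of (mtopology closure_of (range w)) = {}"
    using disc_seq[OF p(1) p(3)] by metis
  define W where "W = range w"
  have WM: "W \<subseteq> M" unfolding W_def using w(1) by blast
  have Wcl: "W \<subseteq> mtopology closure_of W" using closure_of_subset[of W mtopology] WM by simp
  define J where "J = {(k,s). s \<in> S k \<and> (\<exists>z\<in>mball s (1/(real k+1)). \<not> openin mtopology {z})}"
  have "J \<subseteq> Sigma UNIV S" unfolding J_def by blast
  moreover have "countable (Sigma UNIV S)" using S by (intro countable_SIGMA) auto
  ultimately have Jc: "countable J" by (rule countable_subset)
  define e where "e = to_nat_on J"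
  have einj: "inj_on e J" unfolding e_def using Jc by (rule inj_on_to_nat_on)
  define wit where "wit j = w (e j)" for j
  have witinj: "inj_on wit J"
  proof -
    have "inj_on w (e ` J)" using w(2) by (rule inj_on_subset) simp
    then have "inj_on (w \<circ> e) J" using einj by (simp add: comp_inj_on)
    then show ?thesis unfolding wit_def comp_def by simp
  qed
  define Vb where "Vb j = mball (snd j) (1/(real (fst j)+1))" for j
  have Vbq: "\<exists>q\<in>Vb j. q \<notin> F" if jJ: "j \<in> J" and fF: "finite F" for j F
  proof -
    obtain k s where ks: "j = (k,s)" by fastforce
    then obtain z where z: "z \<in> mball s (1/(real k+1))" "\<not> openin mtopology {z}"
      using jJ unfolding J_def by blast
    have "openin mtopology (Vb j)" unfolding Vb_def by simp
    moreover have "z \<in> Vb j" unfolding Vb_def ks using z(1) by simp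
    ultimately show ?thesis using open_nonisol_avoid z(2) fF by blast
  qed
  have "\<forall>F j. \<exists>q. j \<in> J \<and> finite F \<longrightarrow> q \<in> Vb j \<and> q \<notin> F" using Vbq by blast
  then obtain qf where qf: "\<And>F j. j \<in> J \<Longrightarrow> finite F \<Longrightarrow> qf F j \<in> Vb j \<and> qf F j \<notin> F" by metis
  define QF where "QF F = qf F ` {j\<in>J. wit j \<in> F}" for F
  have QFfin: "finite (QF F)" if "finite F" for F
  proof -
    have "{j\<in>J. wit j \<in> F} = wit -` F \<inter> J" by blast
    moreover have "finite (wit -` F \<inter> J)" using that witinj by (rule finite_vimage_IntI)
    ultimately show ?thesis unfolding QF_def by simp
  qed
  have QFM: "QF F \<subseteq> M" if "finite F" for F
  proof
    fix q assume "q \<in> QF F"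
    then obtain j where j: "j \<in> J" "q = qf F j" unfolding QF_def by blast
    then have "q \<in> Vb j" using qf that by blast
    then show "q \<in> M" unfolding Vb_def by simp
  qed
  define GF where "GF F = M - (mtopology closure_of W \<union> QF F)" for F
  have GFp: "openin mtopology (GF F) \<and> (\<forall>x\<in>F. \<not> openin mtopology {x} \<longrightarrow> x \<in> mtopology closure_of (GF F))"
    if F: "finite F" "F \<subseteq> M" for F
  proof
    have Cc: "closedin mtopology (mtopology closure_of W \<union> QF F)"
      using finite_closedM[OF QFfin[OF F(1)] QFM[OF F(1)]] by (intro closedin_Un) simp_all
    then show "openin mtopology (GF F)" unfolding GF_def by (simp add: openin_diff)
    show "\<forall>x\<in>F. \<not> openin mtopology {x} \<longrightarrow> x \<in> mtopology closure_of GF F"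
    proof (intro ballI impI)
      fix x assume x: "x \<in> F" "\<not> openin mtopology {x}"
      have xM: "x \<in> M" using x F by blast
      have "x \<notin> mtopology interior_of (mtopology closure_of W \<union> QF F)"
      proof
        assume xi: "x \<in> mtopology interior_of (mtopology closure_of W \<union> QF F)"
        define U where "U = mtopology interior_of (mtopology closure_of W \<union> QF F)"
        have Uo: "openin mtopology U" unfolding U_def by simp
        have UC: "U \<subseteq> mtopology closure_of W \<union> QF F" unfolding U_def by (rule interior_of_subset)
        define K where "K = QF F - {x}"
        have "finite K" "K \<subseteq> M" unfolding K_def using QFfin[OF F(1)] QFM[OF F(1)] by auto
        then have "closedin mtopology K" by (rule finite_closedM)
        then have U'o: "openin mtopology (U - K)" using Uo by (simp add: openin_diff)
        have xU': "x \<in> U - K" unfolding K_def U_def using xi by simp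
        have U'sub: "U - K \<subseteq> mtopology closure_of W \<union> {x}" using UC unfolding K_def by blast
        show False
        proof (cases "x \<in> mtopology closure_of W")
          case False
          have "closedin mtopology (mtopology closure_of W)" by simp
          then have U''o: "openin mtopology (U - K - mtopology closure_of W)" using U'o by (simp add: openin_diff)
          have "U - K - mtopology closure_of W = {x}" using U'sub xU' False by blast
          then show False using U''o x(2) by simp
        next
          case True
          then have "U - K \<subseteq> mtopology closure_of W" using U'sub by blast
          then have "U - K \<subseteq> mtopology interior_of (mtopology closure_of W)"
            using U'o by (simp add: interior_of_maximal)
          then show False using xU' w(3) unfolding W_def by blast
        qed
      qed
      then show "x \<in> mtopology closure_of GF F" unfolding GF_def
        using closure_of_complement[of mtopology "mtopology closure_of W \<union> QF F"] xM by simp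
    qed
  qed
  obtain BB where BB: "\<And>F. finite F \<Longrightarrow> F \<subseteq> M \<Longrightarrow> closedin mtopology (BB F) \<and> F \<subseteq> BB F \<and> BB F \<subseteq> F \<union> GF F \<and>
     (\<forall>x\<in>BB F. \<forall>U. openin mtopology U \<and> x \<in> U \<longrightarrow> (\<exists>W. openin mtopology W \<and> W \<noteq> {} \<and> W \<subseteq> U \<and> W \<subseteq> BB F))"
    using BBfun[of GF] GFp by metis
  show ?thesis
  proof (rule GEN[OF HZ ab, of mtopology BB])
    fix F assume "finite F" "F \<subseteq> topspace mtopology"
    then show "closedin mtopology (BB F) \<and> F \<subseteq> BB F \<and>
      (\<forall>x \<in> BB F. \<forall>U. openin mtopology U \<and> x \<in> U \<longrightarrow> (\<exists>W. openin mtopology W \<and> W \<noteq> {} \<and> W \<subseteq> U \<and> W \<subseteq> BB F))"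
      using BB by simp
  next
    fix Fs :: "nat \<Rightarrow> 'a set"
    assume Fs0: "\<forall>n. finite (Fs n) \<and> Fs n \<subseteq> topspace mtopology"
    then have Fs: "finite (Fs n)" "Fs n \<subseteq> M" for n by auto
    show "\<not> (\<forall>x \<in> topspace mtopology. eventually (\<lambda>n. x \<in> BB (Fs n)) sequentially)"
    proof
      assume ev0: "\<forall>x \<in> topspace mtopology. eventually (\<lambda>n. x \<in> BB (Fs n)) sequentially"
      then have ev: "\<And>x. x \<in> M \<Longrightarrow> \<exists>N. \<forall>n\<ge>N. x \<in> BB (Fs n)"
        unfolding eventually_sequentially by simp
      define C where "C m = M \<inter> (\<Inter>n\<in>{m..}. BB (Fs n))" for m
      have Ccl: "closedin mtopology (C m)" for m
      proof -
        have "closedin mtopology (\<Inter>n\<in>{m..}. BB (Fs n))"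
          using BB[OF Fs] by (intro closedin_Inter) auto
        then show ?thesis unfolding C_def by (intro closedin_Int) simp_all
      qed
      have "M \<subseteq> (\<Union>m. C m)"
      proof
        fix x assume x: "x \<in> M"
        then obtain N where "\<forall>n\<ge>N. x \<in> BB (Fs n)" using ev by blast
        then have "x \<in> C N" unfolding C_def using x by auto
        then show "x \<in> (\<Union>m. C m)" by blast
      qed
      then obtain m where Cm: "uncountable (C m)"
        using unc countable_subset countable_UN[of UNIV C] by blast
      have "\<not> (\<forall>x. x \<in> mtopology interior_of (C m) \<longrightarrow> openin mtopology {x})"
        using H[OF Ccl[of m]] Cm by blast
      then obtain y where y: "y \<in> mtopology interior_of (C m)" "\<not> openin mtopology {y}" by blast
      then obtain r where r: "r > 0" "mball y r \<subseteq> C m" "y \<in> M" using in_interior_of_mball by blast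
      have "r/2 > 0" using r by simp
      then obtain k where k: "inverse (real (Suc k)) < r/2" using reals_Archimedean by blast
      have kk: "1/(real k+1) < r/2" using k by (simp add: inverse_eq_divide add.commute)
      obtain s where s: "s \<in> S k" "d y s < 1/(real k+1)" using S[of k] r(3) by blast
      have sM: "s \<in> M" using S[of k] s(1) unfolding sep_def by blast
      define j where "j = (k, s)"
      have Vbj: "Vb j = mball s (1/(real k+1))" unfolding Vb_def j_def by simp
      have yVb: "y \<in> Vb j" unfolding Vbj using s sM r(3) commute[of s y] by simp
      have jJ: "j \<in> J" unfolding J_def j_def using s(1) yVb y(2) unfolding Vbj by blast
      have VbC: "Vb j \<subseteq> C m"
      proof
        fix z assume z: "z \<in> Vb j"
        then have zM: "z \<in> M" and dz: "d s z < 1/(real k+1)" unfolding Vbj by auto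
        have "d y z \<le> d y s + d s z" using triangle[of y s z] r(3) sM zM by simp
        then have "d y z < r" using s(2) dz kk by linarith
        then have "z \<in> mball y r" using r(3) zM by simp
        then show "z \<in> C m" using r(2) by blast
      qed
      have witM: "wit j \<in> M" unfolding wit_def using w(1) by blast
      obtain N where N: "\<forall>n\<ge>N. wit j \<in> BB (Fs n)" using ev[OF witM] by blast
      define n where "n = max m N"
      have witB: "wit j \<in> BB (Fs n)" using N unfolding n_def by simp
      have BBsub: "BB (Fs n) \<subseteq> Fs n \<union> GF (Fs n)" using BB[OF Fs] by blast
      have "wit j \<in> mtopology closure_of W" unfolding wit_def W_def using Wcl unfolding W_def by blast
      then have "wit j \<notin> GF (Fs n)" unfolding GF_def by blast
      then have witF: "wit j \<in> Fs n" using witB BBsub by blast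
      define q where "q = qf (Fs n) j"
      have q: "q \<in> Vb j" "q \<notin> Fs n" unfolding q_def using qf[OF jJ Fs(1)] by auto
      have qQ: "q \<in> QF (Fs n)" unfolding QF_def q_def using jJ witF by blast
      have "C m \<subseteq> BB (Fs n)" unfolding C_def n_def by auto
      then have "q \<in> BB (Fs n)" using q(1) VbC by blast
      then have "q \<in> GF (Fs n)" using BBsub q(2) by blast
      then show False using qQ unfolding GF_def by blast
    qed
  qed
qed

end



lemma main_nfu:
  fixes X :: "'a topology" and Z :: "'b topology"
  assumes X: "metrizable_space X" and HZ: "Hausdorff_space Z"
    and ab: "a \<in> topspace Z" "b \<in> topspace Z" "a \<noteq> b" and unc: "uncountable (topspace X)"
  shows "\<not> frechet_urysohn (Qp X Z)"
proof -
  obtain M d where md: "Metric_space M d" and XM: "X = Metric_space.mtopology M d"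
    using X metrizable_space_def by blast
  interpret Metric_space M d by (rule md)
  have uncM: "uncountable M" using unc XM by simp
  show ?thesis
  proof (cases "\<exists>N. closedin mtopology N \<and> uncountable N \<and> (\<forall>x. x \<in> mtopology interior_of N \<longrightarrow> openin mtopology {x})")
    case True
    then obtain N where N: "closedin mtopology N" "uncountable N"
      "\<And>x. x \<in> mtopology interior_of N \<Longrightarrow> openin mtopology {x}" by blast
    show ?thesis unfolding XM by (rule caseA[OF HZ ab N])
  next
    case False
    have H: "countable N" if "closedin mtopology N" "\<And>x. x \<in> mtopology interior_of N \<Longrightarrow> openin mtopology {x}" for N
      using False that by blast
    show ?thesis unfolding XM by (rule caseB[OF HZ ab uncM H])
  qed
qed

theorem corollary7p2:
  fixes X :: "'a topology" and Y :: "'b topology"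
  assumes "metrizable_space X" and "metrizable_space Y"
    and "nontrivial_space X" and "nontrivial_space Y"
  shows "(countable (topspace X) \<longleftrightarrow> frechet_urysohn (Qp X two_point_discrete))
       \<and> (countable (topspace X) \<longleftrightarrow> frechet_urysohn (Qp X Y))
       \<and> (countable (topspace X) \<longleftrightarrow> first_countable (Qp X Y))
       \<and> (countable (topspace X) \<longleftrightarrow> metrizable_space (Qp X Y))"
proof (cases "countable (topspace X)")
  case True
  have mD: "metrizable_space two_point_discrete" unfolding two_point_discrete_def by simp
  have m1: "metrizable_space (Qp X two_point_discrete)" using countable_imp_Qp_metrizable[OF True mD] .
  have m2: "metrizable_space (Qp X Y)" using countable_imp_Qp_metrizable[OF True assms(2)] .
  show ?thesis using True metrizable_imp_FU[OF m1] metrizable_imp_FU[OF m2] metrizable_imp_first_countable[OF m2] m2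
    by simp
next
  case False
  have HD: "Hausdorff_space two_point_discrete" unfolding two_point_discrete_def by simp
  have nD: "\<not> frechet_urysohn (Qp X two_point_discrete)"
    by (rule main_nfu[OF assms(1) HD, of True False]) (use False in \<open>auto simp: two_point_discrete_def\<close>)
  obtain a b where ab: "a \<in> topspace Y" "b \<in> topspace Y" "a \<noteq> b"
    using assms(4) unfolding nontrivial_space_def by blast
  have HY: "Hausdorff_space Y" using assms(2) by (rule metrizable_imp_Hausdorff_space)
  have nY: "\<not> frechet_urysohn (Qp X Y)" by (rule main_nfu[OF assms(1) HY ab False])
  have nf: "\<not> first_countable (Qp X Y)" using nY first_countable_imp_FU by blast
  have nm: "\<not> metrizable_space (Qp X Y)" using nY metrizable_imp_FU by blast
  show ?thesis using False nD nY nf nm by simp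
qed


end
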